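(* Let $C'$ be a generic smooth non-hyperelliptic curve of genus $3$ over $\mathbb{C}$. Let $L'_1\subsetneq L'_2\subsetneq L'_3$ and $\tilde L_1\subsetneq\tilde L_2\subsetneq\tilde L_3$ be two full isotropic flags in $\mathrm{Jac}(C')[2]$ (so $|L'_k|=|\tilde L_k|=2^k$ and $L'_3,\tilde L_3$ are maximal isotropic) such that $\tilde L_1\oplus L'_3={L'_2}^{\perp}$, $\tilde L_2\oplus L'_3={L'_1}^{\perp}$ and $\tilde L_3\oplus L'_3=\mathrm{Jac}(C')[2]$. Let $\alpha'$ be the nonzero element of $L'_1$. Then for every subgroup $H\subset\tilde L_3$ of order $4$: $\#(\Gamma_H\cap\Sigma_{\alpha'})=0$ if $H=\tilde L_2$, and $\#(\Gamma_H\cap\Sigma_{\alpha'})=2$ otherwise.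
   Context: $\mathrm{Jac}(C')[2]\cong\mathbb{F}_2^6$ carries the Weil pairing $\langle\cdot,\cdot\rangle$, a nondegenerate symplectic form; for a subgroup $G$, $G^\perp=\{a:\langle a,g\rangle=0\ \forall g\in G\}$. A theta characteristic is a divisor class $\theta$ with $2\theta=K_{C'}$, odd if $h^0(\theta)$ is odd. For nonzero $\gamma$, the Steiner system $\Sigma_\gamma$ is the set of odd theta characteristics $\theta$ with $\theta+\gamma$ odd. For an isotropic subgroup $H$ of order $4$, $\Gamma_H$ denotes the set of odd theta characteristics $\theta$ such that $\theta+h$ is odd for all $h\in H$ (a set of the form $\{\theta_0+h: h\in H\}$ with four elements). *)

theory Defs
  imports Main
begin

text \<open>The group Jac(C')[2] is an elementary abelian 2-group of
order 64 (type 'v); the Weil pairing is a map w into F_2 = bool (addition in F_2 is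
exclusive or, i.e. inequality on bool).  Theta characteristics form a torsor (type 't)
under Jac(C')[2] via the action act theta a = theta + a, and is_odd is the parity of h^0.\<close>

definition elem2_group :: "'v::ab_group_add itself \<Rightarrow> bool" where
  "elem2_group _ \<longleftrightarrow> (\<forall>a::'v. a + a = 0)"

definition weil_pairing :: "('v::ab_group_add \<Rightarrow> 'v \<Rightarrow> bool) \<Rightarrow> bool" where
  "weil_pairing w \<longleftrightarrow>
     (\<forall>a b c. w (a + b) c = (w a c \<noteq> w b c)) \<and>
     (\<forall>a b c. w a (b + c) = (w a b \<noteq> w a c)) \<and>
     (\<forall>a. \<not> w a a) \<and>
     (\<forall>a. a \<noteq> 0 \<longrightarrow> (\<exists>b. w a b))"

definition torsor :: "('t \<Rightarrow> 'v::ab_group_add \<Rightarrow> 't) \<Rightarrow> bool" where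
  "torsor act \<longleftrightarrow>
     (\<forall>\<theta>. act \<theta> 0 = \<theta>) \<and>
     (\<forall>\<theta> a b. act (act \<theta> a) b = act \<theta> (a + b)) \<and>
     (\<forall>\<theta> \<theta>'. \<exists>!a. act \<theta> a = \<theta>')"

text \<open>Theta characteristic structure of a genus 3 curve: the parity satisfies the
Riemann--Mumford relation  e(th+a+b)+e(th+a)+e(th+b)+e(th) = <a,b>  (mod 2), and there are
exactly 2^(g-1)(2^g-1) = 28 is_odd theta characteristics.\<close>
definition theta_structure ::
  "('v::ab_group_add \<Rightarrow> 'v \<Rightarrow> bool) \<Rightarrow> ('t \<Rightarrow> 'v \<Rightarrow> 't) \<Rightarrow> ('t \<Rightarrow> bool) \<Rightarrow> bool" where
  "theta_structure w act is_odd \<longleftrightarrow>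
     torsor act \<and>
     (\<forall>\<theta> a b. ((is_odd (act \<theta> (a + b)) \<noteq> is_odd (act \<theta> a)) \<noteq> (is_odd (act \<theta> b) \<noteq> is_odd \<theta>)) = w a b) \<and>
     card {\<theta>. is_odd \<theta>} = 28"

definition subgrp :: "'v::ab_group_add set \<Rightarrow> bool" where
  "subgrp H \<longleftrightarrow> 0 \<in> H \<and> (\<forall>a\<in>H. \<forall>b\<in>H. a + b \<in> H) \<and> (\<forall>a\<in>H. - a \<in> H)"

definition isotropic :: "('v::ab_group_add \<Rightarrow> 'v \<Rightarrow> bool) \<Rightarrow> 'v set \<Rightarrow> bool" where
  "isotropic w H \<longleftrightarrow> subgrp H \<and> (\<forall>a\<in>H. \<forall>b\<in>H. \<not> w a b)"

definition perp :: "('v::ab_group_add \<Rightarrow> 'v \<Rightarrow> bool) \<Rightarrow> 'v set \<Rightarrow> 'v set" where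
  "perp w G = {a. \<forall>g\<in>G. \<not> w a g}"

definition direct_sum_eq :: "'v::ab_group_add set \<Rightarrow> 'v set \<Rightarrow> 'v set \<Rightarrow> bool" where
  "direct_sum_eq A B C \<longleftrightarrow> A \<inter> B = {0} \<and> {a + b | a b. a \<in> A \<and> b \<in> B} = C"

definition steiner :: "('t \<Rightarrow> 'v \<Rightarrow> 't) \<Rightarrow> ('t \<Rightarrow> bool) \<Rightarrow> 'v \<Rightarrow> 't set" where
  "steiner act is_odd \<gamma> = {\<theta>. is_odd \<theta> \<and> is_odd (act \<theta> \<gamma>)}"

definition Gamma :: "('t \<Rightarrow> 'v \<Rightarrow> 't) \<Rightarrow> ('t \<Rightarrow> bool) \<Rightarrow> 'v set \<Rightarrow> 't set" where
  "Gamma act is_odd H = {\<theta>. is_odd \<theta> \<and> (\<forall>h\<in>H. is_odd (act \<theta> h))}"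

definition full_isotropic_flag ::
  "('v::ab_group_add \<Rightarrow> 'v \<Rightarrow> bool) \<Rightarrow> 'v set \<Rightarrow> 'v set \<Rightarrow> 'v set \<Rightarrow> bool" where
  "full_isotropic_flag w L1 L2 L3 \<longleftrightarrow>
     isotropic w L1 \<and> isotropic w L2 \<and> isotropic w L3 \<and>
     L1 \<subset> L2 \<and> L2 \<subset> L3 \<and> card L1 = 2 \<and> card L2 = 4 \<and> card L3 = 8"

end

theory Submission
  imports Defs
begin


lemma double_card:
  fixes T :: "'v::ab_group_add set"
  assumes e2: "\<forall>a::'v. a + a = 0" and fin: "finite T" and cl: "\<forall>a\<in>T. \<forall>b\<in>T. a + b \<in> T"
    and g: "g \<notin> T"
  shows "card (T \<union> (\<lambda>x. g + x) ` T) = 2 * card T"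
proof -
  have disj: "T \<inter> (\<lambda>x. g + x) ` T = {}"
  proof (rule ccontr)
    assume "T \<inter> (\<lambda>x. g + x) ` T \<noteq> {}"
    then obtain x where x: "x \<in> T" "g + x \<in> T" by blast
    have "g = (g + x) + x" using e2 by (metis add.assoc add_0_right)
    then show False using cl x g by metis
  qed
  have "inj_on (\<lambda>x. g + x) T" by (simp add: inj_on_def)
  then have "card ((\<lambda>x. g + x) ` T) = card T" by (rule card_image)
  then show ?thesis using card_Un_disjoint[OF fin finite_imageI[OF fin] disj] by simp
qed

lemma cancel2:
  fixes x y :: "'v::ab_group_add"
  assumes "\<forall>a::'v. a + a = 0"
  shows "x + (x + y) = y"
  by (metis add.assoc add_0 assms)

lemma span8:
  fixes S :: "'v::ab_group_add set"
  assumes e2: "\<forall>a::'v. a + a = 0" and fin: "finite S" and cl: "\<forall>a\<in>S. \<forall>b\<in>S. a + b \<in> S"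
    and z: "0 \<in> S" and c8: "card S = 8" and e1S: "e1 \<in> S" and e1z: "e1 \<noteq> 0"
  shows "\<exists>e2 e3. e2 \<in> S \<and> e3 \<in> S \<and> (\<forall>l\<in>S. \<exists>x1 x2 x3. l = (if x1 then e1 else 0) + (if x2 then e2 else 0) + (if x3 then e3 else 0))"
proof -
  have aa: "\<And>a::'v. a + a = 0" using e2 by blast
  have c2: "\<And>x y::'v. x + (x + y) = y" using cancel2[OF e2] by blast
  define T1 where "T1 = {0, e1}"
  have T1c: "card T1 = 2" using e1z by (simp add: T1_def)
  have T1cl: "\<forall>a\<in>T1. \<forall>b\<in>T1. a + b \<in> T1" by (auto simp: T1_def aa)
  have T1S: "T1 \<subseteq> S" using z e1S by (simp add: T1_def)
  obtain g2 where g2: "g2 \<in> S" "g2 \<notin> T1"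
  proof -
    have "\<not> S \<subseteq> T1"
    proof
      assume "S \<subseteq> T1" then have "card S \<le> card T1" by (simp add: card_mono T1_def)
      then show False using c8 T1c by simp
    qed
    then show ?thesis using that by blast
  qed
  define T2 where "T2 = T1 \<union> (\<lambda>x. g2 + x) ` T1"
  have T2c: "card T2 = 4" unfolding T2_def
    using double_card[OF e2 _ T1cl g2(2)] T1c by (simp add: T1_def)
  have T2e: "T2 = {0, e1, g2, g2 + e1}" by (auto simp: T2_def T1_def)
  have T2cl: "\<forall>a\<in>T2. \<forall>b\<in>T2. a + b \<in> T2" unfolding T2e
    by (auto simp: aa c2 add_ac)
  have T2S: "T2 \<subseteq> S" unfolding T2e using z e1S g2 cl by auto
  obtain g3 where g3: "g3 \<in> S" "g3 \<notin> T2"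
  proof -
    have "\<not> S \<subseteq> T2"
    proof
      assume "S \<subseteq> T2" then have "card S \<le> card T2" by (simp add: card_mono T2e)
      then show False using c8 T2c by simp
    qed
    then show ?thesis using that by blast
  qed
  define T3 where "T3 = T2 \<union> (\<lambda>x. g3 + x) ` T2"
  have T3c: "card T3 = 8" unfolding T3_def
    using double_card[OF e2 _ T2cl g3(2)] T2c by (simp add: T2e)
  have T3S: "T3 \<subseteq> S" unfolding T3_def using T2S g3 cl by auto
  have T3eq: "T3 = S" using card_subset_eq[OF fin T3S] T3c c8 by simp
  have T3e: "T3 = {0, e1, g2, g2 + e1, g3, g3 + e1, g3 + g2, g3 + (g2 + e1)}"
    by (auto simp: T3_def T2e)
  define E where "E = (\<lambda>x1 x2 x3. (if x1 then e1 else 0) + (if x2 then g2 else 0) + (if x3 then g3 else (0::'v)))"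
  have "0 = E False False False" "e1 = E True False False" "g2 = E False True False"
    "g2 + e1 = E True True False" "g3 = E False False True" "g3 + e1 = E True False True"
    "g3 + g2 = E False True True" "g3 + (g2 + e1) = E True True True"
    by (simp_all add: E_def add_ac)
  then have "\<forall>l\<in>S. \<exists>x1 x2 x3. l = E x1 x2 x3" unfolding T3eq[symmetric] T3e by blast
  then show ?thesis using g2 g3 unfolding E_def by blast
qed

type_synonym b3 = "bool \<times> bool \<times> bool"
fun xr :: "b3 \<Rightarrow> b3 \<Rightarrow> b3" where "xr (a1,a2,a3) (b1,b2,b3) = (a1\<noteq>b1, a2\<noteq>b2, a3\<noteq>b3)"
fun ip :: "b3 \<Rightarrow> b3 \<Rightarrow> bool" where "ip (a1,a2,a3) (b1,b2,b3) = (((a1\<and>b1) \<noteq> (a2\<and>b2)) \<noteq> (a3\<and>b3))"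

lemma conc_all: "\<forall>A B. A \<noteq> (False,False,False) \<longrightarrow> B \<noteq> (False,False,False) \<longrightarrow> A \<noteq> B \<longrightarrow>
  card {p. ip (fst p) (snd p) \<and> ip (fst p) (xr (snd p) A) \<and> ip (fst p) (xr (snd p) B) \<and> ip (fst p) (xr (snd p) (xr A B)) \<and> ip (xr (fst p) (True,False,False)) (snd p)}
   = (if {(False,False,False),A,B,xr A B} = {y. \<not> fst y} then 0 else 2)"
  by code_simp
lemma card36: "card {p. \<not> ip (fst p) (snd p)} = 36" by code_simp
lemma card4: "card {y::b3. \<not> fst y} = 4" by code_simp
lemma card8: "card {y::b3. True} = 8" by code_simp

theorem lemma2p6:
  fixes w :: "'v::{ab_group_add,finite} \<Rightarrow> 'v \<Rightarrow> bool"
    and act :: "'t::finite \<Rightarrow> 'v \<Rightarrow> 't"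
    and is_odd :: "'t \<Rightarrow> bool"
    and L'1 L'2 L'3 Lt1 Lt2 Lt3 :: "'v set"
    and \<alpha>' :: 'v
  assumes "elem2_group TYPE('v)" and "card (UNIV :: 'v set) = 64"
    and "weil_pairing w"
    and "theta_structure w act is_odd"
    and "full_isotropic_flag w L'1 L'2 L'3"
    and "full_isotropic_flag w Lt1 Lt2 Lt3"
    and "direct_sum_eq Lt1 L'3 (perp w L'2)"
    and "direct_sum_eq Lt2 L'3 (perp w L'1)"
    and "direct_sum_eq Lt3 L'3 UNIV"
    and "\<alpha>' \<in> L'1" and "\<alpha>' \<noteq> 0"
  shows "\<forall>H. subgrp H \<and> H \<subseteq> Lt3 \<and> card H = 4 \<longrightarrow>
           card (Gamma act is_odd H \<inter> steiner act is_odd \<alpha>') = (if H = Lt2 then 0 else 2)"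
proof -
  have e2: "\<forall>a::'v. a + a = 0" using assms(1) unfolding elem2_group_def by blast
  have aa: "\<And>a::'v. a + a = 0" using e2 by blast
  have c2: "\<And>x y::'v. x + (x + y) = y" using cancel2[OF e2] by blast
  have eqz: "\<And>a b::'v. a + b = 0 \<Longrightarrow> a = b" by (metis c2 add_0_right)
  have wl: "\<And>a b c. w (a + b) c = (w a c \<noteq> w b c)"
    and wr: "\<And>a b c. w a (b + c) = (w a b \<noteq> w a c)"
    and waa: "\<And>a. \<not> w a a"
    and wnd: "\<And>a. a \<noteq> 0 \<Longrightarrow> \<exists>b. w a b"
    using assms(3) unfolding weil_pairing_def by blast+
  have w0l: "\<And>c. \<not> w 0 c" using wl[of 0 0] by simp
  have w0r: "\<And>c. \<not> w c 0" using wr[of _ 0 0] by simp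
  have wsym: "\<And>a b. w a b = w b a"
  proof -
    fix a b
    have "w (a+b) (a+b) = ((w a a \<noteq> w a b) \<noteq> (w b a \<noteq> w b b))" unfolding wl wr by blast
    then show "w a b = w b a" using waa[of "a+b"] waa[of a] waa[of b] by simp
  qed
  have wifl: "\<And>P x c. w (if P then x else 0) c = (P \<and> w x c)" by (simp add: w0l)
  have wifr: "\<And>P x c. w c (if P then x else 0) = (P \<and> w c x)" by (simp add: w0r)
  have tors: "torsor act" and Rie: "\<And>\<theta> a b. ((is_odd (act \<theta> (a + b)) \<noteq> is_odd (act \<theta> a)) \<noteq> (is_odd (act \<theta> b) \<noteq> is_odd \<theta>)) = w a b"
    and c28: "card {\<theta>. is_odd \<theta>} = 28"
    using assms(4) unfolding theta_structure_def by blast+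
  have act0: "\<And>\<theta>. act \<theta> 0 = \<theta>" and actadd: "\<And>\<theta> a b. act (act \<theta> a) b = act \<theta> (a + b)"
    and actu: "\<And>\<theta> \<theta>'. \<exists>!a. act \<theta> a = \<theta>'"
    using tors unfolding torsor_def by blast+
  have iL'1: "isotropic w L'1" and iL'3: "isotropic w L'3" and L'13: "L'1 \<subseteq> L'3" and cL'3: "card L'3 = 8"
    using assms(5) unfolding full_isotropic_flag_def by auto
  have iLt2: "isotropic w Lt2" and iLt3: "isotropic w Lt3" and Lt23: "Lt2 \<subseteq> Lt3" and cLt3: "card Lt3 = 8"
    and cLt2: "card Lt2 = 4"
    using assms(6) unfolding full_isotropic_flag_def by auto
  have L'3z: "0 \<in> L'3" and L'3cl: "\<forall>a\<in>L'3. \<forall>b\<in>L'3. a + b \<in> L'3" and L'3w: "\<And>a b. a \<in> L'3 \<Longrightarrow> b \<in> L'3 \<Longrightarrow> \<not> w a b"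
    using iL'3 unfolding isotropic_def subgrp_def by blast+
  have Lt3z: "0 \<in> Lt3" and Lt3cl: "\<forall>a\<in>Lt3. \<forall>b\<in>Lt3. a + b \<in> Lt3" and Lt3w: "\<And>a b. a \<in> Lt3 \<Longrightarrow> b \<in> Lt3 \<Longrightarrow> \<not> w a b"
    using iLt3 unfolding isotropic_def subgrp_def by blast+
  have aL3: "\<alpha>' \<in> L'3" using assms(10) L'13 by blast
  have Lt2perp: "\<And>t. t \<in> Lt2 \<Longrightarrow> \<not> w t \<alpha>'"
  proof -
    fix t assume t: "t \<in> Lt2"
    have "t + 0 \<in> perp w L'1" using assms(8) t L'3z unfolding direct_sum_eq_def by blast
    then show "\<not> w t \<alpha>'" using assms(10) unfolding perp_def by simp
  qed
  have decomp: "\<And>v. \<exists>a l. a \<in> Lt3 \<and> l \<in> L'3 \<and> v = a + l"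
    using assms(9) unfolding direct_sum_eq_def by blast
  obtain e2 e3 where e2L: "e2 \<in> L'3" and e3L: "e3 \<in> L'3"
    and spanL: "\<forall>l\<in>L'3. \<exists>x1 x2 x3. l = (if x1 then \<alpha>' else 0) + (if x2 then e2 else 0) + (if x3 then e3 else 0)"
    using span8[OF e2 finite L'3cl L'3z cL'3 aL3 assms(11)] by blast
  define E where "E = (\<lambda>x1 x2 x3. (if x1 then \<alpha>' else 0) + (if x2 then e2 else 0) + (if x3 then e3 else (0::'v)))"
  have ww: "\<not> w \<alpha>' \<alpha>'" "\<not> w \<alpha>' e2" "\<not> w \<alpha>' e3" "\<not> w e2 \<alpha>'" "\<not> w e2 e2" "\<not> w e2 e3"
     "\<not> w e3 \<alpha>'" "\<not> w e3 e2" "\<not> w e3 e3" using L'3w aL3 e2L e3L by blast+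
  define dm where "dm = (\<lambda>t. (w t \<alpha>', w t e2, w t e3))"
  have perpall: "\<And>d. d \<in> Lt3 \<Longrightarrow> \<not> w d \<alpha>' \<Longrightarrow> \<not> w d e2 \<Longrightarrow> \<not> w d e3 \<Longrightarrow> d = 0"
  proof (rule ccontr)
    fix d assume d: "d \<in> Lt3" "\<not> w d \<alpha>'" "\<not> w d e2" "\<not> w d e3" "d \<noteq> 0"
    obtain v where v: "w d v" using wnd d(5) by blast
    obtain a l where al: "a \<in> Lt3" "l \<in> L'3" "v = a + l" using decomp by blast
    obtain x1 x2 x3 where l: "l = E x1 x2 x3" using spanL al(2) unfolding E_def by blast
    have "\<not> w d a" using Lt3w d(1) al(1) by blast
    moreover have "\<not> w d l" unfolding l E_def using d by (simp add: wr wifr)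
    ultimately show False using v al(3) by (simp add: wr)
  qed
  have injdm: "inj_on dm Lt3"
  proof (rule inj_onI)
    fix t t' assume t: "t \<in> Lt3" "t' \<in> Lt3" "dm t = dm t'"
    have "t + t' = 0" by (rule perpall) (use t Lt3cl in \<open>auto simp: dm_def wl\<close>)
    then show "t = t'" by (rule eqz)
  qed
  have dmU: "dm ` Lt3 = UNIV"
  proof -
    have "card (dm ` Lt3) = 8" using card_image[OF injdm] cLt3 by simp
    moreover have "card (UNIV :: b3 set) = 8" using card8 by simp
    ultimately show ?thesis using card_subset_eq[of "UNIV :: b3 set" "dm ` Lt3"] by simp
  qed
  obtain f1 where f1: "f1 \<in> Lt3" "dm f1 = (True, False, False)" using dmU by (metis UNIV_I imageE)
  obtain f2 where f2: "f2 \<in> Lt3" "dm f2 = (False, True, False)" using dmU by (metis UNIV_I imageE)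
  obtain f3 where f3: "f3 \<in> Lt3" "dm f3 = (False, False, True)" using dmU by (metis UNIV_I imageE)
  have wf: "w f1 \<alpha>'" "\<not> w f1 e2" "\<not> w f1 e3" "\<not> w f2 \<alpha>'" "w f2 e2" "\<not> w f2 e3"
    "\<not> w f3 \<alpha>'" "\<not> w f3 e2" "w f3 e3" using f1 f2 f3 by (auto simp: dm_def)
  have we: "w \<alpha>' f1" "\<not> w e2 f1" "\<not> w e3 f1" "\<not> w \<alpha>' f2" "w e2 f2" "\<not> w e3 f2"
    "\<not> w \<alpha>' f3" "\<not> w e2 f3" "w e3 f3" using wf wsym by metis+
  have wff: "\<not> w f1 f1" "\<not> w f1 f2" "\<not> w f1 f3" "\<not> w f2 f1" "\<not> w f2 f2" "\<not> w f2 f3"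
     "\<not> w f3 f1" "\<not> w f3 f2" "\<not> w f3 f3" using Lt3w f1 f2 f3 by blast+
  define F where "F = (\<lambda>y1 y2 y3. (if y1 then f1 else 0) + (if y2 then f2 else 0) + (if y3 then f3 else (0::'v)))"
  have FL: "\<And>y1 y2 y3. F y1 y2 y3 \<in> Lt3" unfolding F_def using Lt3cl Lt3z f1 f2 f3 by simp
  have dmF: "\<And>y1 y2 y3. dm (F y1 y2 y3) = (y1, y2, y3)"
    unfolding F_def dm_def by (simp add: wl wifl wf)

  define cx where "cx = (\<lambda>v. (w v f1, w v f2, w v f3))"
  have key: "\<And>v. v = E (w v f1) (w v f2) (w v f3) + F (w v \<alpha>') (w v e2) (w v e3)"
  proof -
    fix v
    obtain a l where al: "a \<in> Lt3" "l \<in> L'3" "v = a + l" using decomp by blast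
    obtain x1 x2 x3 where l: "l = E x1 x2 x3" using spanL al(2) unfolding E_def by blast
    have aF: "a = F (w a \<alpha>') (w a e2) (w a e3)"
      using injdm al(1) FL dmF[of "w a \<alpha>'" "w a e2" "w a e3"] unfolding inj_on_def dm_def by metis
    have a0: "\<not> w a f1" "\<not> w a f2" "\<not> w a f3" using Lt3w al(1) f1 f2 f3 by blast+
    have l0: "\<not> w l \<alpha>'" "\<not> w l e2" "\<not> w l e3" using L'3w al(2) aL3 e2L e3L by blast+
    have x: "w v f1 = x1" "w v f2 = x2" "w v f3 = x3" unfolding al(3) l E_def
      using a0 by (simp_all add: wl wifl we)
    have y: "w v \<alpha>' = w a \<alpha>'" "w v e2 = w a e2" "w v e3 = w a e3" unfolding al(3)
      using l0 by (simp_all add: wl)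
    show "v = E (w v f1) (w v f2) (w v f3) + F (w v \<alpha>') (w v e2) (w v e3)"
      unfolding x y using al(3) l aF by (simp add: add.commute)
  qed
  define c where "c = (\<lambda>v. (cx v, dm v))"
  have cinj: "inj c"
  proof (rule injI)
    fix u v assume "c u = c v"
    then have "w u f1 = w v f1" "w u f2 = w v f2" "w u f3 = w v f3" "w u \<alpha>' = w v \<alpha>'" "w u e2 = w v e2" "w u e3 = w v e3"
      by (auto simp: c_def cx_def dm_def)
    then show "u = v" using key[of u] key[of v] by simp
  qed
  have cEF: "\<And>x1 x2 x3 y1 y2 y3. c (E x1 x2 x3 + F y1 y2 y3) = ((x1,x2,x3),(y1,y2,y3))"
    unfolding c_def cx_def dm_def E_def F_def by (simp add: wl wifl we ww wf wff)
  have csurj: "surj c"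
  proof -
    have "\<And>p. p \<in> range c"
    proof -
      fix p :: "b3 \<times> b3"
      obtain x1 x2 x3 y1 y2 y3 where "p = ((x1,x2,x3),(y1,y2,y3))" by (metis prod.exhaust)
      then show "p \<in> range c" using cEF by (metis rangeI)
    qed
    then show ?thesis by blast
  qed
  have ctrans: "\<And>P. card {v. P (c v)} = card {p. P p}"
  proof -
    fix P :: "b3 \<times> b3 \<Rightarrow> bool"
    have ee: "{v. P (c v)} = c -` {p. P p}" by auto
    have "card (c -` {p. P p}) = card {p. P p}" using card_vimage_inj[OF cinj, of "{p. P p}"] csurj by simp
    then show "card {v. P (c v)} = card {p. P p}" unfolding ee .
  qed
  have cxadd: "\<And>u v. cx (u + v) = xr (cx u) (cx v)" by (simp add: cx_def wl)
  have dmadd: "\<And>u v. dm (u + v) = xr (dm u) (dm v)" by (simp add: dm_def wl)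
  define q0 where "q0 = (\<lambda>v. is_odd (act undefined v))"
  define cc where "cc = E (q0 f1 \<noteq> q0 0) (q0 f2 \<noteq> q0 0) (q0 f3 \<noteq> q0 0) + F (q0 \<alpha>' \<noteq> q0 0) (q0 e2 \<noteq> q0 0) (q0 e3 \<noteq> q0 0)"
  define \<theta>0 where "\<theta>0 = act undefined cc"
  define q where "q = (\<lambda>v. is_odd (act \<theta>0 v))"
  have q00: "q 0 = is_odd \<theta>0" by (simp add: q_def act0)
  have qadd: "\<And>a b. q (a + b) = (((q a \<noteq> q b) \<noteq> q 0) \<noteq> w a b)"
  proof -
    fix a b
    have "((is_odd (act \<theta>0 (a + b)) \<noteq> is_odd (act \<theta>0 a)) \<noteq> (is_odd (act \<theta>0 b) \<noteq> is_odd \<theta>0)) = w a b" by (rule Rie)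
    then show "q (a + b) = (((q a \<noteq> q b) \<noteq> q 0) \<noteq> w a b)" unfolding q_def act0 by argo
  qed
  have qq0: "\<And>v. q v = q0 (cc + v)" by (simp add: q_def q0_def \<theta>0_def actadd)
  have q0add: "\<And>a b. q0 (a + b) = (((q0 a \<noteq> q0 b) \<noteq> q0 0) \<noteq> w a b)"
  proof -
    fix a b
    have "((is_odd (act undefined (a + b)) \<noteq> is_odd (act undefined a)) \<noteq> (is_odd (act undefined b) \<noteq> is_odd undefined)) = w a b" by (rule Rie)
    then show "q0 (a + b) = (((q0 a \<noteq> q0 b) \<noteq> q0 0) \<noteq> w a b)" unfolding q0_def act0 by argo
  qed
  have wcc: "w cc f1 = (q0 f1 \<noteq> q0 0)" "w cc f2 = (q0 f2 \<noteq> q0 0)" "w cc f3 = (q0 f3 \<noteq> q0 0)"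
    "w cc \<alpha>' = (q0 \<alpha>' \<noteq> q0 0)" "w cc e2 = (q0 e2 \<noteq> q0 0)" "w cc e3 = (q0 e3 \<noteq> q0 0)"
    using cEF[of "q0 f1 \<noteq> q0 0" "q0 f2 \<noteq> q0 0" "q0 f3 \<noteq> q0 0" "q0 \<alpha>' \<noteq> q0 0" "q0 e2 \<noteq> q0 0" "q0 e3 \<noteq> q0 0"]
    unfolding cc_def[symmetric] c_def cx_def dm_def by simp_all
  have qcc: "q 0 = q0 cc" using qq0[of 0] by simp
  have qbase: "\<And>e. q e = ((((q0 cc \<noteq> q0 e) \<noteq> q0 0) \<noteq> w cc e))" using qq0 q0add by simp
  have qb: "q f1 = q 0" "q f2 = q 0" "q f3 = q 0" "q \<alpha>' = q 0" "q e2 = q 0" "q e3 = q 0"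
    using w0r[of cc] unfolding qbase wcc by auto
  define K where "K = (\<lambda>v. q v \<noteq> q 0)"
  have Kadd: "\<And>a b. K (a + b) = ((K a \<noteq> K b) \<noteq> w a b)" unfolding K_def qadd by argo
  have Kif: "\<And>P x. K (if P then x else 0) = (P \<and> K x)" unfolding K_def by simp
  have Kb: "\<not> K f1" "\<not> K f2" "\<not> K f3" "\<not> K \<alpha>'" "\<not> K e2" "\<not> K e3" unfolding K_def using qb by simp_all
  have KEF: "\<And>x1 x2 x3 y1 y2 y3. K (E x1 x2 x3 + F y1 y2 y3) = ip (x1,x2,x3) (y1,y2,y3)"
    unfolding E_def F_def by (simp add: Kadd Kif Kb wl wr wifl wifr we ww wf wff) blast
  have qc: "\<And>v. q v = (q 0 \<noteq> ip (cx v) (dm v))"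
  proof -
    fix v
    have "K v = K (E (w v f1) (w v f2) (w v f3) + F (w v \<alpha>') (w v e2) (w v e3))"
      by (rule arg_cong[OF key[of v], of K])
    also have "\<dots> = ip (cx v) (dm v)" unfolding KEF cx_def dm_def ..
    finally show "q v = (q 0 \<noteq> ip (cx v) (dm v))" unfolding K_def by argo
  qed
  have actinj: "inj (act \<theta>0)" by (metis actu injI)
  have actsurj: "\<And>\<theta>. \<exists>v. act \<theta>0 v = \<theta>" using actu by blast
  have oddimg: "{\<theta>. is_odd \<theta>} = act \<theta>0 ` {v. q v}"
  proof
    show "{\<theta>. is_odd \<theta>} \<subseteq> act \<theta>0 ` {v. q v}"
    proof
      fix \<theta> assume "\<theta> \<in> {\<theta>. is_odd \<theta>}"
      moreover obtain v where "act \<theta>0 v = \<theta>" using actsurj by blast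
      ultimately show "\<theta> \<in> act \<theta>0 ` {v. q v}" unfolding q_def by blast
    qed
    show "act \<theta>0 ` {v. q v} \<subseteq> {\<theta>. is_odd \<theta>}" unfolding q_def by blast
  qed
  have "card {v. q v} = 28" using c28 oddimg card_image[OF inj_on_subset[OF actinj]] by simp
  obtain b where b: "q 0 = b" by blast
  have qcb: "\<And>v. q v = (b \<noteq> ip (fst (c v)) (snd (c v)))"
  proof -
    fix v
    have "q v = (q 0 \<noteq> ip (cx v) (dm v))" by (rule qc)
    then show "q v = (b \<noteq> ip (fst (c v)) (snd (c v)))" unfolding b c_def by simp
  qed
  have "{v. q v} = {v. b \<noteq> ip (fst (c v)) (snd (c v))}" unfolding qcb ..
  with \<open>card {v. q v} = 28\<close> have cq: "card {v. b \<noteq> ip (fst (c v)) (snd (c v))} = 28" by simp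
  have q0F: "\<not> b"
  proof
    assume q0t: "b"
    then have "card {v. \<not> ip (fst (c v)) (snd (c v))} = 28" using cq by simp
    then show False using ctrans[of "\<lambda>p. \<not> ip (fst p) (snd p)"] card36 by simp
  qed
  have qc2: "\<And>v. q v = ip (cx v) (dm v)" using qcb q0F unfolding c_def by simp
  have xr0: "\<And>x. xr x (False,False,False) = x" by auto
  have dm0: "dm 0 = (False,False,False)" by (simp add: dm_def w0l)
  have key2: "\<And>v h. is_odd (act (act \<theta>0 v) h) = q (v + h)" unfolding q_def actadd ..
  have qv: "\<And>v. is_odd (act \<theta>0 v) = q v" unfolding q_def ..
  have cxal: "cx \<alpha>' = (True,False,False)" using we by (simp add: cx_def)
  have dmal: "dm \<alpha>' = (False,False,False)" using ww by (simp add: dm_def)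
  show ?thesis
  proof (intro allI impI)
    fix H assume Hh: "subgrp H \<and> H \<subseteq> Lt3 \<and> card H = 4"
    have Hz: "0 \<in> H" and Hcl: "\<forall>a\<in>H. \<forall>b\<in>H. a + b \<in> H" and HL: "H \<subseteq> Lt3" and cH: "card H = 4"
      using Hh unfolding subgrp_def by blast+
    obtain a where a: "a \<in> H" "a \<noteq> 0"
    proof -
      have "\<not> H \<subseteq> {0}"
      proof
        assume "H \<subseteq> {0}" then have "card H \<le> card {0::'v}" by (rule card_mono[rotated]) simp
        then show False using cH by simp
      qed
      then show ?thesis using that by blast
    qed
    obtain b where b: "b \<in> H" "b \<noteq> 0" "b \<noteq> a"
    proof -
      have "\<not> H \<subseteq> {0, a}"
      proof
        assume "H \<subseteq> {0, a}" then have "card H \<le> card {0, a}" by (rule card_mono[rotated]) simp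
        then show False using cH a(2) by simp
      qed
      then show ?thesis using that by blast
    qed
    have ab: "a + b \<noteq> 0" using eqz b(3) by metis
    have sub4: "{0, a, b, a + b} \<subseteq> H" using Hz a b Hcl by blast
    have c4: "card {0, a, b, a + b} = 4" using a(2) b(2,3) ab by simp
    have Heq: "H = {0, a, b, a + b}"
      using card_subset_eq[OF finite sub4] c4 cH by simp
    define Sv where "Sv = {v. q v \<and> q (v + a) \<and> q (v + b) \<and> q (v + (a + b)) \<and> q (v + \<alpha>')}"
    have GS: "Gamma act is_odd H \<inter> steiner act is_odd \<alpha>' = act \<theta>0 ` Sv"
    proof (rule set_eqI)
      fix \<theta>
      obtain v where v: "act \<theta>0 v = \<theta>" using actsurj by blast
      have "\<theta> \<in> Gamma act is_odd H \<inter> steiner act is_odd \<alpha>' \<longleftrightarrow> v \<in> Sv"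
        unfolding v[symmetric] Gamma_def steiner_def Heq Sv_def by (auto simp: key2 qv)
      moreover have "\<theta> \<in> act \<theta>0 ` Sv \<longleftrightarrow> v \<in> Sv" unfolding v[symmetric] by (rule inj_image_mem_iff[OF actinj])
      ultimately show "\<theta> \<in> Gamma act is_odd H \<inter> steiner act is_odd \<alpha>' \<longleftrightarrow> \<theta> \<in> act \<theta>0 ` Sv" by blast
    qed
    have cardS: "card (Gamma act is_odd H \<inter> steiner act is_odd \<alpha>') = card Sv"
      unfolding GS by (rule card_image[OF inj_on_subset[OF actinj subset_UNIV]])
    define A where "A = dm a"
    define B where "B = dm b"
    have aL: "a \<in> Lt3" and bL: "b \<in> Lt3" using a b HL by blast+
    have cxa: "cx a = (False,False,False)" using Lt3w[OF aL f1(1)] Lt3w[OF aL f2(1)] Lt3w[OF aL f3(1)] by (simp add: cx_def)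
    have cxb: "cx b = (False,False,False)" using Lt3w[OF bL f1(1)] Lt3w[OF bL f2(1)] Lt3w[OF bL f3(1)] by (simp add: cx_def)
    define P where "P = (\<lambda>p. ip (fst p) (snd p) \<and> ip (fst p) (xr (snd p) A) \<and> ip (fst p) (xr (snd p) B) \<and> ip (fst p) (xr (snd p) (xr A B)) \<and> ip (xr (fst p) (True,False,False)) (snd p))"
    have SvP: "Sv = {v. P (c v)}"
      unfolding Sv_def P_def c_def qc2 cxadd dmadd cxa cxb cxal dmal xr0 A_def B_def by simp
    have A0: "A \<noteq> (False,False,False)"
    proof
      assume "A = (False,False,False)"
      then have "dm a = dm 0" unfolding A_def dm0 .
      then show False using injdm aL Lt3z a(2) unfolding inj_on_def by blast
    qed
    have B0: "B \<noteq> (False,False,False)"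
    proof
      assume "B = (False,False,False)"
      then have "dm b = dm 0" unfolding B_def dm0 .
      then show False using injdm bL Lt3z b(2) unfolding inj_on_def by blast
    qed
    have AB: "A \<noteq> B"
    proof
      assume "A = B"
      then have "dm a = dm b" unfolding A_def B_def .
      then show False using injdm aL bL b(3) unfolding inj_on_def by blast
    qed
    have dmH: "dm ` H = {(False,False,False), A, B, xr A B}"
      unfolding Heq A_def B_def by (simp add: dm0 dmadd)
    have dmL2: "dm ` Lt2 = {y. \<not> fst y}"
    proof -
      have s: "dm ` Lt2 \<subseteq> {y. \<not> fst y}" using Lt2perp by (auto simp: dm_def)
      have "card (dm ` Lt2) = 4" using card_image[OF inj_on_subset[OF injdm Lt23]] cLt2 by simp
      then show ?thesis using card_subset_eq[OF _ s] card4 by simp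
    qed
    have HL2: "(H = Lt2) = ({(False,False,False), A, B, xr A B} = {y. \<not> fst y})"
      using inj_on_image_eq_iff[OF injdm HL Lt23] dmH dmL2 by simp
    have cc2: "card {p. P p} = (if {(False,False,False), A, B, xr A B} = {y. \<not> fst y} then 0 else 2)"
      unfolding P_def by (rule conc_all[rule_format, OF A0 B0 AB])
    show "card (Gamma act is_odd H \<inter> steiner act is_odd \<alpha>') = (if H = Lt2 then 0 else 2)"
      unfolding cardS SvP ctrans HL2 by (rule cc2)
  qed
qed
end
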